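(* Let $x\cdot y$ be a PA-structure on $(\mathfrak{g},\mathfrak{n})$, where $\mathfrak{g}$ is abelian and $\mathfrak{n}$ is a Heisenberg Lie algebra of dimension $n\ge5$. Then $Z(\mathfrak{n})\cdot\mathfrak{n}=\mathfrak{n}\cdot Z(\mathfrak{n})=0$, and $x\circ y=\frac12(x\cdot y+y\cdot x)$ defines a CPA-structure on $\mathfrak{n}$.
   Context: Let $K$ be a field of characteristic zero and $V$ a finite-dimensional vector space over $K$. Let $\mathfrak{g}=(V,[\,,])$ and $\mathfrak{n}=(V,\{\,,\})$ be two Lie algebra structures on $V$. A post-Lie algebra structure (PA-structure) on the pair $(\mathfrak{g},\mathfrak{n})$ is a $K$-bilinear product $x\cdot y$ on $V$ satisfying, for all $x,y,z\in V$: (i) $x\cdot y-y\cdot x=[x,y]-\{x,y\}$; (ii) $[x,y]\cdot z=x\cdot(y\cdot z)-y\cdot(x\cdot z)$; (iii) $x\cdot\{y,z\}=\{x\cdot y,z\}+\{y,x\cdot z\}$. The Heisenberg Lie algebra of dimension $2m+1$ has a basis $e_1,\dots,e_m,f_1,\dots,f_m,z$ with nonzero brackets $\{e_i,f_i\}=z$ ($1\le i\le m$). $Z(\mathfrak{n})$ is the center. A commutative post-Lie algebra structure (CPA-structure) on $\mathfrak{n}=(V,\{\,,\})$ is a bilinear product $x\circ y$ on $V$ with $x\circ y=y\circ x$, $\{x,y\}\circ z=x\circ(y\circ z)-y\circ(x\circ z)$, and $x\circ\{y,z\}=\{x\circ y,z\}+\{y,x\circ z\}$ for all $x,y,z$.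 *)

theory Defs
  imports Complex_Main
begin

definition bilinear_map :: "('k::field \<Rightarrow> 'v::ab_group_add \<Rightarrow> 'v) \<Rightarrow> ('v \<Rightarrow> 'v \<Rightarrow> 'v) \<Rightarrow> bool" where
  "bilinear_map scale p \<longleftrightarrow>
     (\<forall>x. Vector_Spaces.linear scale scale (\<lambda>y. p x y)) \<and>
     (\<forall>y. Vector_Spaces.linear scale scale (\<lambda>x. p x y))"

definition lie_algebra :: "('k::field \<Rightarrow> 'v::ab_group_add \<Rightarrow> 'v) \<Rightarrow> ('v \<Rightarrow> 'v \<Rightarrow> 'v) \<Rightarrow> bool" where
  "lie_algebra scale br \<longleftrightarrow> bilinear_map scale br \<and>
     (\<forall>x. br x x = 0) \<and>
     (\<forall>x y z. br x (br y z) + br y (br z x) + br z (br x y) = 0)"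

definition abelian_lie :: "('v::ab_group_add \<Rightarrow> 'v \<Rightarrow> 'v) \<Rightarrow> bool" where
  "abelian_lie br \<longleftrightarrow> (\<forall>x y. br x y = 0)"

definition lie_center :: "('v::ab_group_add \<Rightarrow> 'v \<Rightarrow> 'v) \<Rightarrow> 'v set" where
  "lie_center br = {z. \<forall>x. br z x = 0}"

definition heisenberg :: "('k::field \<Rightarrow> 'v::ab_group_add \<Rightarrow> 'v) \<Rightarrow> ('v \<Rightarrow> 'v \<Rightarrow> 'v) \<Rightarrow> nat \<Rightarrow> bool" where
  "heisenberg scale br m \<longleftrightarrow> lie_algebra scale br \<and>
     (\<exists>e f z. let B = e ` {..<m} \<union> f ` {..<m} \<union> {z} in
        card B = 2 * m + 1 \<and>
        \<not> Modules.module.dependent scale B \<and>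
        Modules.module.span scale B = UNIV \<and>
        (\<forall>i<m. \<forall>j<m. br (e i) (f j) = (if i = j then z else 0)) \<and>
        (\<forall>i<m. \<forall>j<m. br (e i) (e j) = 0) \<and>
        (\<forall>i<m. \<forall>j<m. br (f i) (f j) = 0) \<and>
        (\<forall>i<m. br (e i) z = 0 \<and> br (f i) z = 0))"

definition PA_structure :: "('k::field \<Rightarrow> 'v::ab_group_add \<Rightarrow> 'v) \<Rightarrow> ('v \<Rightarrow> 'v \<Rightarrow> 'v)
    \<Rightarrow> ('v \<Rightarrow> 'v \<Rightarrow> 'v) \<Rightarrow> ('v \<Rightarrow> 'v \<Rightarrow> 'v) \<Rightarrow> bool" where
  "PA_structure scale g n dot \<longleftrightarrow> bilinear_map scale dot \<and>
     (\<forall>x y. dot x y - dot y x = g x y - n x y) \<and>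
     (\<forall>x y z. dot (g x y) z = dot x (dot y z) - dot y (dot x z)) \<and>
     (\<forall>x y z. dot x (n y z) = n (dot x y) z + n y (dot x z))"

definition CPA_structure :: "('k::field \<Rightarrow> 'v::ab_group_add \<Rightarrow> 'v) \<Rightarrow> ('v \<Rightarrow> 'v \<Rightarrow> 'v)
    \<Rightarrow> ('v \<Rightarrow> 'v \<Rightarrow> 'v) \<Rightarrow> bool" where
  "CPA_structure scale n circ \<longleftrightarrow> bilinear_map scale circ \<and>
     (\<forall>x y. circ x y = circ y x) \<and>
     (\<forall>x y z. circ (n x y) z = circ x (circ y z) - circ y (circ x z)) \<and>
     (\<forall>x y z. circ x (n y z) = n (circ x y) z + n y (circ x z))"

end

theory Submission imports Defs begin

lemma bil:
  assumes "bilinear_map scale p"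
  shows "p x (a + b) = p x a + p x b" "p (a + b) y = p a y + p b y"
    "p x (scale c a) = scale c (p x a)" "p (scale c a) y = scale c (p a y)"
    "p x 0 = 0" "p 0 y = 0" "p x (a - b) = p x a - p x b" "p (a - b) y = p a y - p b y"
    "p x (- a) = - p x a" "p (- a) y = - p a y"
    "Vector_Spaces.linear scale scale (\<lambda>y. p x y)" "Vector_Spaces.linear scale scale (\<lambda>x. p x y)"
proof -
  have l1: "Vector_Spaces.linear scale scale (\<lambda>y. p x y)" and l2: "Vector_Spaces.linear scale scale (\<lambda>x. p x y)"
    using assms unfolding bilinear_map_def by auto
  interpret a: module_hom scale scale "\<lambda>y. p x y" using l1 by (simp add: linear_iff_module_hom)
  interpret b: module_hom scale scale "\<lambda>x. p x y" using l2 by (simp add: linear_iff_module_hom)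
  show "p x (a + b) = p x a + p x b" "p (a + b) y = p a y + p b y"
    "p x (scale c a) = scale c (p x a)" "p (scale c a) y = scale c (p a y)"
    "p x 0 = 0" "p 0 y = 0" "p x (a - b) = p x a - p x b" "p (a - b) y = p a y - p b y"
    "p x (- a) = - p x a" "p (- a) y = - p a y"
    using a.add a.scale a.zero b.add b.scale b.zero a.diff b.diff a.neg b.neg by auto
  show "Vector_Spaces.linear scale scale (\<lambda>y. p x y)" "Vector_Spaces.linear scale scale (\<lambda>x. p x y)"
    using l1 l2 by auto
qed

lemma antisym:
  assumes "lie_algebra scale n" shows "n a b = - n b a"
proof -
  have B: "bilinear_map scale n" and z: "\<And>x. n x x = 0" using assms unfolding lie_algebra_def by auto
  have "0 = n (a + b) (a + b)" using z by simp
  also have "\<dots> = n a a + n a b + n b a + n b b" by (simp add: bil[OF B] add.assoc)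
  finally show ?thesis using z by (simp add: eq_neg_iff_add_eq_0)
qed

lemma cyclic:
  assumes L: "lie_algebra scale n" and D: "bilinear_map scale dot"
    and C: "\<And>x y. dot x y - dot y x = - n x y"
    and Der: "\<And>x y z. dot x (n y z) = n (dot x y) z + n y (dot x z)"
  shows "dot a (n y b) + dot b (n a y) + dot y (n b a) = 0"
proof -
  have B: "bilinear_map scale n" and J: "\<And>x y z. n x (n y z) + n y (n z x) + n z (n x y) = 0"
    using L unfolding lie_algebra_def by auto
  have h1: "dot a (n y b) = n (dot a y) b - n (dot a b) y" using Der[of a y b] antisym[OF L, of y "dot a b"] by simp
  have h2: "dot b (n a y) = n (dot b a) y - n (dot b y) a" using Der[of b a y] antisym[OF L, of a "dot b y"] by simp
  have h3: "dot y (n b a) = n (dot y b) a - n (dot y a) b" using Der[of y b a] antisym[OF L, of b "dot y a"] by simp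
  have "dot a (n y b) + dot b (n a y) + dot y (n b a)
     = n (dot a y - dot y a) b + n (dot b a - dot a b) y + n (dot y b - dot b y) a"
    unfolding h1 h2 h3 bil(8)[OF B] by (simp add: algebra_simps)
  also have "\<dots> = - (n (n a y) b + n (n b a) y + n (n y b) a)"
    unfolding C bil(10)[OF B] by simp
  also have "\<dots> = n b (n a y) + n y (n b a) + n a (n y b)"
    using antisym[OF L, of "n a y" b] antisym[OF L, of "n b a" y] antisym[OF L, of "n y b" a] by simp
  also have "\<dots> = 0" using J[of b a y] by (simp add: algebra_simps)
  finally show ?thesis .
qed

lemma zero_on_span:
  assumes "Vector_Spaces.linear s s h" "module.span s B = UNIV" "\<And>b. b \<in> B \<Longrightarrow> h b = 0"
  shows "h x = 0"
proof -
  interpret module_hom s s h using assms(1) by (simp add: linear_iff_module_hom)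
  show ?thesis using eq_0_on_span[of B x] assms by auto
qed


theorem proposition4p11:
  fixes scale :: "'k::field_char_0 \<Rightarrow> 'v::ab_group_add \<Rightarrow> 'v"
    and g n dot :: "'v \<Rightarrow> 'v \<Rightarrow> 'v"
    and m :: nat
  assumes "vector_space scale"
    and "lie_algebra scale g" and "abelian_lie g"
    and "heisenberg scale n m" and "2 * m + 1 \<ge> 5"
    and "PA_structure scale g n dot"
  shows "(\<forall>z \<in> lie_center n. \<forall>x. dot z x = 0 \<and> dot x z = 0) \<and>
         CPA_structure scale n (\<lambda>x y. scale (1/2) (dot x y + dot y x))"
proof -
  interpret vs: vector_space scale by fact
  have Ln: "lie_algebra scale n" using assms(4) unfolding heisenberg_def by auto
  have nB: "bilinear_map scale n" using Ln unfolding lie_algebra_def by auto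
  have g0: "\<And>x y. g x y = 0" using assms(3) unfolding abelian_lie_def by auto
  have dB: "bilinear_map scale dot" using assms(6) unfolding PA_structure_def by auto
  have dC: "\<And>x y. dot x y - dot y x = - n x y" using assms(6) g0 unfolding PA_structure_def by auto
  have dcomm: "\<And>x y c. dot x (dot y c) = dot y (dot x c)"
  proof -
    fix x y c
    have "dot (g x y) c = dot x (dot y c) - dot y (dot x c)" using assms(6) unfolding PA_structure_def by auto
    then show "dot x (dot y c) = dot y (dot x c)" using g0 bil(6)[OF dB] by simp
  qed
  have Der: "\<And>x y c. dot x (n y c) = n (dot x y) c + n y (dot x c)"
    using assms(6) unfolding PA_structure_def by auto
  have m2: "m \<ge> 2" using assms(5) by simp
  have ex: "\<exists>e f z. card (e ` {..<m} \<union> f ` {..<m} \<union> {z}) = 2 * m + 1 \<and>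
        \<not> vs.dependent (e ` {..<m} \<union> f ` {..<m} \<union> {z}) \<and>
        vs.span (e ` {..<m} \<union> f ` {..<m} \<union> {z}) = UNIV \<and>
        (\<forall>i<m. \<forall>j<m. n (e i) (f j) = (if i = j then z else 0)) \<and>
        (\<forall>i<m. \<forall>j<m. n (e i) (e j) = 0) \<and>
        (\<forall>i<m. \<forall>j<m. n (f i) (f j) = 0) \<and>
        (\<forall>i<m. n (e i) z = 0 \<and> n (f i) z = 0)"
    using assms(4) unfolding heisenberg_def Let_def by (simp only:)
  then obtain e f z where H: "card (e ` {..<m} \<union> f ` {..<m} \<union> {z}) = 2 * m + 1 \<and>
        \<not> vs.dependent (e ` {..<m} \<union> f ` {..<m} \<union> {z}) \<and>
        vs.span (e ` {..<m} \<union> f ` {..<m} \<union> {z}) = UNIV \<and>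
        (\<forall>i<m. \<forall>j<m. n (e i) (f j) = (if i = j then z else 0)) \<and>
        (\<forall>i<m. \<forall>j<m. n (e i) (e j) = 0) \<and>
        (\<forall>i<m. \<forall>j<m. n (f i) (f j) = 0) \<and>
        (\<forall>i<m. n (e i) z = 0 \<and> n (f i) z = 0)" by (elim exE)
  have indB: "\<not> vs.dependent (e ` {..<m} \<union> f ` {..<m} \<union> {z})" using H by (elim conjE) auto
  have spB: "vs.span (e ` {..<m} \<union> f ` {..<m} \<union> {z}) = UNIV" using H by (elim conjE) auto
  have ef: "\<And>i j. i < m \<Longrightarrow> j < m \<Longrightarrow> n (e i) (f j) = (if i = j then z else 0)" using H by (elim conjE) auto
  have ee: "\<And>i j. i < m \<Longrightarrow> j < m \<Longrightarrow> n (e i) (e j) = 0" using H by (elim conjE) auto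
  have ff: "\<And>i j. i < m \<Longrightarrow> j < m \<Longrightarrow> n (f i) (f j) = 0" using H by (elim conjE) auto
  have ez: "\<And>i. i < m \<Longrightarrow> n (e i) z = 0" using H by (elim conjE) auto
  have fz: "\<And>i. i < m \<Longrightarrow> n (f i) z = 0" using H by (elim conjE) auto
  define B where "B = e ` {..<m} \<union> f ` {..<m} \<union> {z}"
  have finB: "finite B" unfolding B_def by auto
  have zne: "z \<noteq> 0" using indB vs.dependent_zero by blast
  have as: "\<And>a b. n a b = - n b a" using antisym[OF Ln] .
  have zz: "n z z = 0" using Ln unfolding lie_algebra_def by auto
  have T1: "\<And>i v. i < m \<Longrightarrow> v \<in> B \<Longrightarrow> n v (f i) = (if v = e i then z else 0)"
  proof -
    fix i v assume i: "i < m" and v: "v \<in> B"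
    have eii: "n (e i) (f i) = z" using ef[OF i i] by simp
    from v consider (E) j where "j < m" "v = e j" | (F) j where "j < m" "v = f j" | (Z) "v = z"
      unfolding B_def by auto
    then show "n v (f i) = (if v = e i then z else 0)"
    proof cases
      case E then show ?thesis using ef[OF E(1) i] eii by (cases "i = j") auto
    next
      case F then show ?thesis using ff[OF F(1) i] eii zne by auto
    next
      case Z then show ?thesis using fz[OF i] as[of z "f i"] eii zne by auto
    qed
  qed
  have T2: "\<And>i v. i < m \<Longrightarrow> v \<in> B \<Longrightarrow> n v (e i) = (if v = f i then - z else 0)"
  proof -
    fix i v assume i: "i < m" and v: "v \<in> B"
    have fii: "n (f i) (e i) = - z" using ef[OF i i] as[of "f i" "e i"] by simp
    from v consider (E) j where "j < m" "v = e j" | (F) j where "j < m" "v = f j" | (Z) "v = z"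
      unfolding B_def by auto
    then show "n v (e i) = (if v = f i then - z else 0)"
    proof cases
      case E then show ?thesis using ee[OF E(1) i] fii zne by auto
    next
      case F then show ?thesis using ef[OF i F(1)] as[of "f j" "e i"] fii by (cases "i = j") auto
    next
      case Z then show ?thesis using ez[OF i] as[of z "e i"] fii zne by auto
    qed
  qed
  have T3: "\<And>v. v \<in> B \<Longrightarrow> n z v = 0"
  proof -
    fix v assume "v \<in> B"
    then consider (E) i where "i < m" "v = e i" | (F) i where "i < m" "v = f i" | (Z) "v = z"
      unfolding B_def by auto
    then show "n z v = 0"
    proof cases
      case E then show ?thesis using ez[OF E(1)] as[of z "e i"] by simp
    next
      case F then show ?thesis using fz[OF F(1)] as[of z "f i"] by simp
    next
      case Z then show ?thesis using zz by simp
    qed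
  qed
  have zc: "\<And>w. n z w = 0"
    by (rule zero_on_span[OF bil(11)[OF nB] spB[folded B_def]]) (rule T3)
  define i0 :: nat where "i0 = 0"
  have i0: "i0 < m" using m2 by (simp add: i0_def)
  have other: "\<And>i. i < m \<Longrightarrow> \<exists>j<m. j \<noteq> i"
  proof -
    fix i assume "i < m"
    show "\<exists>j<m. j \<noteq> i"
    proof (cases "i = 0")
      case True then show ?thesis using m2 by (intro exI[of _ 1]) auto
    next
      case False then show ?thesis using m2 by (intro exI[of _ 0]) auto
    qed
  qed
  have cyc: "\<And>a y b. dot a (n y b) + dot b (n a y) + dot y (n b a) = 0"
    by (rule cyclic[where n=n and dot=dot and scale=scale, OF Ln dB dC Der])
  have dzB: "\<And>v. v \<in> B \<Longrightarrow> dot v z = 0"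
  proof -
    fix v assume v: "v \<in> B"
    from v consider (E) i where "i < m" "v = e i" | (F) i where "i < m" "v = f i" | (Z) "v = z"
      unfolding B_def by auto
    then show "dot v z = 0"
    proof cases
      case E
      obtain j where j: "j < m" "j \<noteq> i" using other[OF E(1)] by auto
      have "dot (e i) (n (e j) (f j)) + dot (f j) (n (e i) (e j)) + dot (e j) (n (f j) (e i)) = 0" by (rule cyc)
      then show ?thesis using E j ef[OF j(1) j(1)] ee[OF E(1) j(1)] ef[OF E(1) j(1)] as[of "f j" "e i"]
        bil(5)[OF dB] by simp
    next
      case F
      obtain j where j: "j < m" "j \<noteq> i" using other[OF F(1)] by auto
      have "dot (f i) (n (e j) (f j)) + dot (f j) (n (f i) (e j)) + dot (e j) (n (f j) (f i)) = 0" by (rule cyc)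
      then show ?thesis using F j ef[OF j(1) j(1)] ff[OF j(1) F(1)] ef[OF j(1) F(1)] as[of "f i" "e j"]
        bil(5)[OF dB] by simp
    next
      case Z
      have "dot z (n (e i0) (f i0)) + dot (f i0) (n z (e i0)) + dot (e i0) (n (f i0) z) = 0" by (rule cyc)
      then show ?thesis using Z ef[OF i0 i0] zc fz[OF i0] bil(5)[OF dB] by simp
    qed
  qed
  have dz: "\<And>x. dot x z = 0"
    by (rule zero_on_span[OF bil(12)[OF dB] spB[folded B_def]]) (rule dzB)
  have cen: "\<And>w x. w \<in> lie_center n \<Longrightarrow> dot x w = 0"
  proof -
    fix w x assume w: "w \<in> lie_center n"
    have "w \<in> vs.span B" using spB B_def by auto
    then obtain u where wu: "w = (\<Sum>v\<in>B. scale (u v) v)" using vs.span_finite[OF finB] by auto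
    interpret h1: module_hom scale scale "\<lambda>y. dot x y" using bil(11)[OF dB] by (simp add: linear_iff_module_hom)
    have ue: "u (e i) = 0" if i: "i < m" for i
    proof -
      interpret h2: module_hom scale scale "\<lambda>y. n y (f i)" using bil(12)[OF nB] by (simp add: linear_iff_module_hom)
      have "0 = n w (f i)" using w unfolding lie_center_def by auto
      also have "\<dots> = (\<Sum>v\<in>B. scale (u v) (n v (f i)))" unfolding wu h2.sum h2.scale ..
      also have "\<dots> = (\<Sum>v\<in>B. if v = e i then scale (u v) z else 0)"
        by (rule sum.cong) (auto simp: T1[OF i])
      also have "\<dots> = scale (u (e i)) z" using i finB unfolding B_def by (simp add: sum.delta)
      finally show ?thesis using zne by simp
    qed
    have uf: "u (f i) = 0" if i: "i < m" for i
    proof -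
      interpret h2: module_hom scale scale "\<lambda>y. n y (e i)" using bil(12)[OF nB] by (simp add: linear_iff_module_hom)
      have "0 = n w (e i)" using w unfolding lie_center_def by auto
      also have "\<dots> = (\<Sum>v\<in>B. scale (u v) (n v (e i)))" unfolding wu h2.sum h2.scale ..
      also have "\<dots> = (\<Sum>v\<in>B. if v = f i then scale (u v) (- z) else 0)"
        by (rule sum.cong) (auto simp: T2[OF i])
      also have "\<dots> = scale (u (f i)) (- z)" using i finB unfolding B_def by (simp add: sum.delta)
      finally show ?thesis using zne by simp
    qed
    have "dot x w = (\<Sum>v\<in>B. scale (u v) (dot x v))" unfolding wu h1.sum h1.scale ..
    also have "\<dots> = 0"
      by (rule sum.neutral) (auto simp: B_def ue uf dz)
    finally show "dot x w = 0" .
  qed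
  have cen2: "\<And>w x. w \<in> lie_center n \<Longrightarrow> dot w x = 0"
  proof -
    fix w x assume w: "w \<in> lie_center n"
    have "n x w = 0" using w as[of x w] unfolding lie_center_def by auto
    then show "dot w x = 0" using dC[of x w] cen[OF w, of x] by (simp add: algebra_simps)
  qed
  have brB: "\<And>v v' w. v \<in> B \<Longrightarrow> v' \<in> B \<Longrightarrow> n (n v v') w = 0"
  proof -
    fix v v' w assume v: "v \<in> B" and v': "v' \<in> B"
    from v' consider (E) i where "i < m" "v' = e i" | (F) i where "i < m" "v' = f i" | (Z) "v' = z"
      unfolding B_def by auto
    then show "n (n v v') w = 0"
    proof cases
      case E then show ?thesis using T2[OF E(1) v] zc bil(6,10)[OF nB] by auto
    next
      case F then show ?thesis using T1[OF F(1) v] zc bil(6)[OF nB] by auto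
    next
      case Z then show ?thesis using T3[OF v] zc as[of v z] bil(6)[OF nB] by auto
    qed
  qed
  have brc: "\<And>x y w. n (n x y) w = 0"
  proof -
    fix x y w
    have lin1: "Vector_Spaces.linear scale scale (\<lambda>x. n (n x y') w)" for y'
      using Vector_Spaces.linear_compose[OF bil(12)[OF nB, of y'] bil(12)[OF nB, of w]] by (simp add: o_def)
    have lin2: "Vector_Spaces.linear scale scale (\<lambda>y. n (n x y) w)"
      using Vector_Spaces.linear_compose[OF bil(11)[OF nB, of x] bil(12)[OF nB, of w]] by (simp add: o_def)
    have "\<And>y'. y' \<in> B \<Longrightarrow> n (n x y') w = 0"
      by (rule zero_on_span[OF lin1 spB[folded B_def]]) (rule brB)
    then show "n (n x y) w = 0"
      by (rule zero_on_span[OF lin2 spB[folded B_def]])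
  qed
  have brcen: "\<And>x y. n x y \<in> lie_center n" unfolding lie_center_def using brc by auto
  have part1: "\<forall>w \<in> lie_center n. \<forall>x. dot w x = 0 \<and> dot x w = 0" using cen cen2 by auto
  define h where "h = scale (1/2)"
  have hh: "\<And>a. h a + h a = a"
  proof -
    fix a
    have "h a + h a = scale (1/2 + 1/2) a" unfolding h_def by (rule vs.scale_left_distrib[symmetric])
    then show "h a + h a = a" by simp
  qed
  have ci: "\<And>x p. scale (1/2) (dot x p + dot p x) = dot x p + h (n x p)"
  proof -
    fix x p
    have "dot p x = dot x p + n x p" using dC[of x p] by (simp add: algebra_simps)
    then have "scale (1/2) (dot x p + dot p x) = h (dot x p) + h (dot x p) + h (n x p)"
      unfolding h_def by (simp add: vs.scale_right_distrib add.assoc)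
    then show "scale (1/2) (dot x p + dot p x) = dot x p + h (n x p)" using hh by simp
  qed
  have h0: "h 0 = 0" unfolding h_def by simp
  have circB: "bilinear_map scale (\<lambda>x y. scale (1/2) (dot x y + dot y x))"
    unfolding bilinear_map_def
  proof (intro conjI allI)
    fix x
    show "Vector_Spaces.linear scale scale (\<lambda>y. scale (1/2) (dot x y + dot y x))"
      using assms(1)
      by (intro iffD2[OF Vector_Spaces.linear_iff] conjI allI) (simp_all add: bil(1-10)[OF dB] vs.scale_right_distrib algebra_simps)
    show "Vector_Spaces.linear scale scale (\<lambda>y. scale (1/2) (dot y x + dot x y))"
      using assms(1)
      by (intro iffD2[OF Vector_Spaces.linear_iff] conjI allI) (simp_all add: bil(1-10)[OF dB] vs.scale_right_distrib algebra_simps)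
  qed
  have P3: "\<And>x y c. scale (1/2) (dot (n x y) c + dot c (n x y)) =
     scale (1/2) (dot x (scale (1/2) (dot y c + dot c y)) + dot (scale (1/2) (dot y c + dot c y)) x) -
     scale (1/2) (dot y (scale (1/2) (dot x c + dot c x)) + dot (scale (1/2) (dot x c + dot c x)) y)"
  proof -
    fix x y c
    have L: "scale (1/2) (dot (n x y) c + dot c (n x y)) = 0" using cen[OF brcen] cen2[OF brcen] by simp
    have R1: "scale (1/2) (dot x (scale (1/2) (dot y c + dot c y)) + dot (scale (1/2) (dot y c + dot c y)) x)
       = dot x (dot y c) + h (n x (dot y c))" for x y
      unfolding ci unfolding h_def using cen[OF brcen] brc as[of x "n y c"]
      by (simp add: bil[OF dB] bil[OF nB])
    have c1: "dot y (n x c) = 0" using cen brcen by blast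
    have c2: "dot x (n y c) = 0" using cen brcen by blast
    have yx: "dot y x = dot x y + n x y" using dC[of x y] by (simp add: algebra_simps)
    have "n (dot y x) c = n (dot x y) c" unfolding yx bil(2)[OF nB] brc by simp
    then have E1: "n x (dot y c) = - n (dot x y) c"
      using Der[of y x c] c1 by (simp add: eq_neg_iff_add_eq_0 add.commute)
    have E2: "n y (dot x c) = - n (dot x y) c"
      using Der[of x y c] c2 by (simp add: eq_neg_iff_add_eq_0 add.commute)
    show "?thesis x y c" unfolding L R1 using dcomm[of x y c] E1 E2 by simp
  qed
  have P4: "\<And>x y c. scale (1/2) (dot x (n y c) + dot (n y c) x) =
     n (scale (1/2) (dot x y + dot y x)) c + n y (scale (1/2) (dot x c + dot c x))"
  proof -
    fix x y c
    have "n (scale (1/2) (dot x y + dot y x)) c + n y (scale (1/2) (dot x c + dot c x))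
        = n (dot x y) c + n y (dot x c)"
      unfolding ci h_def using brc as[of y "n x c"] by (simp add: bil[OF nB])
    also have "\<dots> = dot x (n y c)" using Der by simp
    also have "\<dots> = 0" using cen[OF brcen] by simp
    finally show "?thesis x y c" using cen[OF brcen] cen2[OF brcen] by simp
  qed
  have "CPA_structure scale n (\<lambda>x y. scale (1/2) (dot x y + dot y x))"
    unfolding CPA_structure_def using circB P3 P4 by (auto simp: add.commute)
  with part1 show ?thesis by blast
qed

end
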